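(* Let $\varepsilon\in(0,2)$. For all sufficiently large $n$ (depending on $\varepsilon$) there exists an approximately convex set $A\subseteq\ell_1^n$ such that $$\mathcal{H}(A,\operatorname{Co}(A))\ge\log_2 n-\varepsilon\qquad\text{and}\qquad\operatorname{diam}(A)\le\Bigl(\frac{8}{\varepsilon}+1\Bigr)\log_2 n.$$
   Context: $\ell_1^n$ is $\mathbb{R}^n$ with the norm $\sum|a_i|$. A set $A$ is approximately convex if $d(tx+(1-t)y,A)\le1$ for all $x,y\in A$, $t\in[0,1]$, where $d(x,A)=\inf_{a\in A}\|x-a\|$. $\mathcal{H}$ is the Hausdorff distance, $\operatorname{Co}$ the convex hull, $\operatorname{diam}(A)=\sup\{\|x-y\|:x,y\in A\}$. *)

theory Defs
  imports "HOL-Analysis.Analysis"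
begin

text \<open>Points of \<open>\<ell>_1^n\<close> are represented as functions \<open>nat \<Rightarrow> real\<close> vanishing outside \<open>{..<n}\<close>.\<close>

definition l1space :: "nat \<Rightarrow> (nat \<Rightarrow> real) set" where
  "l1space n = {x. \<forall>i\<ge>n. x i = 0}"

definition l1norm :: "nat \<Rightarrow> (nat \<Rightarrow> real) \<Rightarrow> real" where
  "l1norm n x = (\<Sum>i<n. \<bar>x i\<bar>)"

definition l1dist :: "nat \<Rightarrow> (nat \<Rightarrow> real) \<Rightarrow> (nat \<Rightarrow> real) \<Rightarrow> real" where
  "l1dist n x y = l1norm n (\<lambda>i. x i - y i)"

definition l1setdist :: "nat \<Rightarrow> (nat \<Rightarrow> real) \<Rightarrow> (nat \<Rightarrow> real) set \<Rightarrow> real" where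
  "l1setdist n x A = Inf ((\<lambda>a. l1dist n x a) ` A)"

definition approx_convex :: "nat \<Rightarrow> (nat \<Rightarrow> real) set \<Rightarrow> bool" where
  "approx_convex n A \<longleftrightarrow>
     (\<forall>x\<in>A. \<forall>y\<in>A. \<forall>t::real. 0 \<le> t \<and> t \<le> 1 \<longrightarrow>
        l1setdist n (\<lambda>i. t * x i + (1 - t) * y i) A \<le> 1)"

definition Co :: "(nat \<Rightarrow> real) set \<Rightarrow> (nat \<Rightarrow> real) set" where
  "Co A = {x. \<exists>(k::nat) (c::nat \<Rightarrow> real) (p::nat \<Rightarrow> nat \<Rightarrow> real).
              (\<forall>i<k. 0 \<le> c i \<and> p i \<in> A) \<and> (\<Sum>i<k. c i) = 1 \<and>
              x = (\<lambda>j. \<Sum>i<k. c i * p i j)}"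

definition hausd :: "nat \<Rightarrow> (nat \<Rightarrow> real) set \<Rightarrow> (nat \<Rightarrow> real) set \<Rightarrow> real" where
  "hausd n A B = max (Sup ((\<lambda>a. l1setdist n a B) ` A)) (Sup ((\<lambda>b. l1setdist n b A) ` B))"

definition l1diam :: "nat \<Rightarrow> (nat \<Rightarrow> real) set \<Rightarrow> real" where
  "l1diam n A = Sup {l1dist n x y | x y. x \<in> A \<and> y \<in> A}"

end

theory Submission
  imports Defs "HOL-Analysis.Analysis"
begin

lemma gibbs:
  fixes a c :: real assumes "0 \<le> a" "0 < c"
  shows "a - c \<le> a * ln a - a * ln c"
proof (cases "a = 0")
  case True then show ?thesis using assms by simp
next
  case False
  then have ap: "0 < a" using assms by simp
  have "ln (c/a) \<le> c/a - 1" using ap assms by (intro ln_le_minus_one) simp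
  then have "ln c - ln a \<le> c/a - 1" using ap assms by (simp add: ln_div)
  then have "a * (ln c - ln a) \<le> a * (c/a - 1)" using ap by (intro mult_left_mono) auto
  then show ?thesis using ap by (simp add: algebra_simps)
qed

lemma xlnx_mult:
  fixes t s :: real assumes "0 \<le> t" "0 \<le> s"
  shows "(t * s) * ln (t * s) = t * (s * ln s) + s * (t * ln t)"
  using assms by (cases "t = 0 \<or> s = 0") (auto simp: ln_mult algebra_simps)

lemma xlnx_subadd:
  fixes a b :: real assumes "0 \<le> a" "0 \<le> b"
  shows "a*ln a + b*ln b \<le> (a+b)*ln(a+b)"
proof -
  have 1: "a * ln a \<le> a * ln (a+b)"
  proof (cases "a = 0")
    case False then show ?thesis using assms by (intro mult_left_mono) auto
  qed simp
  have 2: "b * ln b \<le> b * ln (a+b)"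
  proof (cases "b = 0")
    case False then show ?thesis using assms by (intro mult_left_mono) auto
  qed simp
  show ?thesis using 1 2 by (simp add: algebra_simps)
qed

lemma xlnx_convex:
  fixes t a b :: real assumes "0 \<le> t" "t \<le> 1" "0 \<le> a" "0 \<le> b"
  shows "(t*a+(1-t)*b)*ln(t*a+(1-t)*b) \<le> t*(a*ln a) + (1-t)*(b*ln b)"
proof -
  define c where "c = t*a+(1-t)*b"
  have ta: "0 \<le> t*a" and tb: "0 \<le> (1-t)*b" using assms by auto
  show ?thesis
  proof (cases "c = 0")
    case True
    then have "t*a = 0" "(1-t)*b = 0" using ta tb c_def by linarith+
    then have h1: "t*(a*ln a) = 0" and h2: "(1-t)*(b*ln b) = 0" by (metis mult.assoc mult_zero_left)+
    have h0: "t*a+(1-t)*b = 0" using True c_def by simp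
    show ?thesis unfolding h0 h1 h2 by simp
  next
    case False
    then have cp: "0 < c" using ta tb c_def by linarith
    have g1: "t*(a - c) \<le> t*(a * ln a - a * ln c)" using gibbs[OF assms(3) cp] assms by (intro mult_left_mono) auto
    have g2: "(1-t)*(b - c) \<le> (1-t)*(b * ln b - b * ln c)" using gibbs[OF assms(4) cp] assms by (intro mult_left_mono) auto
    have "t*(a - c) + (1-t)*(b - c) = 0" unfolding c_def by (simp add: algebra_simps)
    then have "0 \<le> t*(a * ln a - a * ln c) + (1-t)*(b * ln b - b * ln c)" using g1 g2 by linarith
    then show ?thesis unfolding c_def[symmetric] by (simp add: c_def algebra_simps)
  qed
qed

lemma binent:
  fixes t :: real assumes "0 \<le> t" "t \<le> 1"
  shows "-(t*ln t) - (1-t)*ln(1-t) \<le> ln 2"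
proof -
  have l: "ln (1/2::real) = - ln 2" by (simp add: ln_div)
  have "t - 1/2 \<le> t * ln t - t * ln (1/2)" using gibbs[of t "1/2"] assms by simp
  moreover have "(1-t) - 1/2 \<le> (1-t) * ln (1-t) - (1-t) * ln (1/2)" using gibbs[of "1-t" "1/2"] assms by simp
  ultimately show ?thesis unfolding l by (simp add: algebra_simps)
qed

definition Hn :: "nat \<Rightarrow> (nat \<Rightarrow> real) \<Rightarrow> real" where
  "Hn m p = - (\<Sum>i<m. p i * ln (p i))"

lemma Hn_le:
  assumes "1 \<le> m" "\<forall>i<m. 0 \<le> p i" "(\<Sum>i<m. p i) = 1"
  shows "Hn m p \<le> ln (real m)"
proof -
  have mp: "0 < 1 / real m" using assms by simp
  have "(\<Sum>i<m. p i - 1/real m) \<le> (\<Sum>i<m. p i * ln (p i) - p i * ln (1/real m))"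
    using gibbs[OF _ mp] assms by (intro sum_mono) auto
  moreover have "(\<Sum>i<m. p i - 1/real m) = 0" using assms by (simp add: sum_subtractf)
  moreover have "(\<Sum>i<m. p i * ln (p i) - p i * ln (1/real m)) = - Hn m p + ln (real m)"
  proof -
    have "(\<Sum>i<m. p i * ln (p i) - p i * ln (1/real m)) = (\<Sum>i<m. p i * ln (p i)) - (\<Sum>i<m. p i) * ln (1/real m)"
      by (simp add: sum_subtractf sum_distrib_right)
    then show ?thesis using assms by (simp add: Hn_def ln_div)
  qed
  ultimately show ?thesis by linarith
qed

lemma Hn_ge0:
  assumes "\<forall>i<m. 0 \<le> p i \<and> p i \<le> 1"
  shows "0 \<le> Hn m p"
proof -
  have "(\<Sum>i<m. p i * ln (p i)) \<le> 0"
  proof (intro sum_nonpos)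
    fix i assume "i \<in> {..<m}"
    then have "0 \<le> p i" "p i \<le> 1" using assms by auto
    then show "p i * ln (p i) \<le> 0"
      by (cases "p i = 0") (auto simp: mult_nonneg_nonpos)
  qed
  then show ?thesis by (simp add: Hn_def)
qed

lemma Dbound:
  fixes m p :: real assumes "1 \<le> m" "0 \<le> p" "p \<le> 1"
  shows "p * ln (m*p) \<le> (2*ln m + 2) * \<bar>p - 1/m\<bar>"
proof -
  have lm: "0 \<le> ln m" using assms by simp
  have R0: "0 \<le> (2*ln m + 2) * \<bar>p - 1/m\<bar>" using lm by simp
  show ?thesis
  proof (cases "m*p \<le> 1")
    case True
    show ?thesis
    proof (cases "p = 0")
      case False
      then have "ln (m*p) \<le> 0" using True assms by simp
      then have "p * ln (m*p) \<le> 0" using assms by (simp add: mult_nonneg_nonpos)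
      then show ?thesis using R0 by linarith
    qed (use R0 in simp)
  next
    case False
    then have mp1: "1 < m*p" by simp
    have pp: "0 < p" using mp1 assms by (metis mult_nonneg_nonpos not_le order.strict_iff_not le_less_trans zero_le_one)
    have pm: "p - 1/m > 0" using mp1 assms by (simp add: field_simps)
    then have ab: "\<bar>p - 1/m\<bar> = p - 1/m" by simp
    show ?thesis
    proof (cases "m*p \<le> 2")
      case True
      have "ln (m*p) \<le> m*p - 1" using mp1 by (intro ln_le_minus_one) simp
      then have "p * ln (m*p) \<le> p * (m*p - 1)" using pp by (intro mult_left_mono) auto
      also have "p * (m*p - 1) = (m*p) * (p - 1/m)" using assms by (simp add: field_simps)
      also have "\<dots> \<le> 2 * (p - 1/m)" using True pm by (intro mult_right_mono) auto
      also have "\<dots> \<le> (2*ln m + 2) * (p - 1/m)" using lm pm by (intro mult_right_mono) auto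
      finally show ?thesis using ab by simp
    next
      case False
      have "ln (m*p) \<le> ln m" using assms pp by (subst ln_le_cancel_iff) (auto intro: mult_left_le)
      then have "p * ln (m*p) \<le> p * ln m" using pp by (intro mult_left_mono) auto
      also have "p \<le> 2 * (p - 1/m)" using False assms by (simp add: field_simps)
      then have "p * ln m \<le> 2 * (p - 1/m) * ln m" using lm by (intro mult_right_mono) auto
      also have "\<dots> \<le> (2*ln m + 2) * (p - 1/m)" using pm by (simp add: algebra_simps)
      finally show ?thesis using ab by simp
    qed
  qed
qed

lemma Hn_deficit:
  assumes "1 \<le> m" "\<forall>i<m. 0 \<le> p i \<and> p i \<le> 1" "(\<Sum>i<m. p i) = 1"
  shows "ln (real m) - Hn m p \<le> (2*ln (real m) + 2) * (\<Sum>i<m. \<bar>p i - 1/real m\<bar>)"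
proof -
  have e: "p i * ln (real m * p i) = p i * ln (real m) + p i * ln (p i)" if "i < m" for i
    using assms that by (cases "p i = 0") (auto simp: ln_mult algebra_simps)
  have "(\<Sum>i<m. p i * ln (real m * p i)) = (\<Sum>i<m. p i) * ln (real m) + (\<Sum>i<m. p i * ln (p i))"
    by (simp add: e sum.distrib sum_distrib_right)
  then have "(\<Sum>i<m. p i * ln (real m * p i)) = ln (real m) - Hn m p"
    using assms by (simp add: Hn_def)
  moreover have "(\<Sum>i<m. p i * ln (real m * p i)) \<le> (\<Sum>i<m. (2*ln (real m) + 2) * \<bar>p i - 1/real m\<bar>)"
    using assms by (intro sum_mono Dbound) auto
  ultimately show ?thesis by (simp add: sum_distrib_left)
qed

lemma Hn_mix:
  assumes "\<forall>i<m. 0 \<le> p i" "\<forall>i<m. 0 \<le> q i" "(\<Sum>i<m. p i) = 1" "(\<Sum>i<m. q i) = 1"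
    "0 \<le> t" "t \<le> 1"
  shows "t * Hn m p + (1-t) * Hn m q \<le> Hn m (\<lambda>i. t * p i + (1-t) * q i)"
    and "Hn m (\<lambda>i. t * p i + (1-t) * q i) \<le> t * Hn m p + (1-t) * Hn m q + ln 2"
proof -
  let ?c = "\<lambda>i. t * p i + (1-t) * q i"
  have sp: "(\<Sum>i<m. t * (p i * ln (p i)) + (1-t) * (q i * ln (q i))) =
      t * (\<Sum>i<m. p i * ln (p i)) + (1-t) * (\<Sum>i<m. q i * ln (q i))"
    by (simp add: sum.distrib sum_distrib_left)
  show "t * Hn m p + (1-t) * Hn m q \<le> Hn m ?c"
  proof -
    have "(\<Sum>i<m. ?c i * ln (?c i)) \<le> (\<Sum>i<m. t * (p i * ln (p i)) + (1-t) * (q i * ln (q i)))"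
      using assms xlnx_convex[of t] by (intro sum_mono) auto
    then show ?thesis using sp by (simp add: Hn_def algebra_simps)
  qed
  show "Hn m ?c \<le> t * Hn m p + (1-t) * Hn m q + ln 2"
  proof -
    have "(\<Sum>i<m. t * (p i * ln (p i)) + (1-t) * (q i * ln (q i)) + p i * (t * ln t) + q i * ((1-t)*ln(1-t)))
          \<le> (\<Sum>i<m. ?c i * ln (?c i))"
    proof (intro sum_mono)
      fix i assume i: "i \<in> {..<m}"
      have s: "(t * p i) * ln (t * p i) + ((1-t) * q i) * ln ((1-t) * q i) \<le> (t * p i + (1-t) * q i) * ln (t * p i + (1-t) * q i)"
        using assms i by (intro xlnx_subadd) auto
      have e1: "(t * p i) * ln (t * p i) = t * (p i * ln (p i)) + p i * (t * ln t)"
        using assms i by (intro xlnx_mult) auto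
      have e2: "((1-t) * q i) * ln ((1-t) * q i) = (1-t) * (q i * ln (q i)) + q i * ((1-t) * ln (1-t))"
        using assms i by (intro xlnx_mult) auto
      show "t * (p i * ln (p i)) + (1-t) * (q i * ln (q i)) + p i * (t * ln t) + q i * ((1-t)*ln(1-t))
          \<le> ?c i * ln (?c i)"
        using s e1 e2 by simp
    qed
    moreover have "(\<Sum>i<m. t * (p i * ln (p i)) + (1-t) * (q i * ln (q i)) + p i * (t * ln t) + q i * ((1-t)*ln(1-t)))
       = t * (\<Sum>i<m. p i * ln (p i)) + (1-t) * (\<Sum>i<m. q i * ln (q i)) + (\<Sum>i<m. p i) * (t * ln t) + (\<Sum>i<m. q i) * ((1-t)*ln(1-t))"
      by (simp add: sum.distrib sum_distrib_left sum_distrib_right)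
    moreover have "-(t*ln t) - (1-t)*ln(1-t) \<le> ln 2" using binent assms by simp
    ultimately show ?thesis using assms by (simp add: Hn_def algebra_simps)
  qed
qed


lemma l1dist_nonneg: "0 \<le> l1dist n x y"
  unfolding l1dist_def l1norm_def by (intro sum_nonneg) auto

lemma l1dist_Suc: "l1dist (Suc m) f g = (\<Sum>i<m. \<bar>f i - g i\<bar>) + \<bar>f m - g m\<bar>"
  by (simp add: l1dist_def l1norm_def)

lemma l1norm_Suc: "l1norm (Suc m) f = (\<Sum>i<m. \<bar>f i\<bar>) + \<bar>f m\<bar>"
  by (simp add: l1norm_def)

lemma setdist_le: "a \<in> A \<Longrightarrow> l1setdist n x A \<le> l1dist n x a"
  unfolding l1setdist_def
  by (rule cInf_lower) (auto intro: bdd_belowI[where m=0] simp: l1dist_nonneg)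

lemma l1dist_tri: "l1dist n x a \<le> l1norm n x + l1norm n a"
  unfolding l1dist_def l1norm_def sum.distrib[symmetric]
  by (intro sum_mono) (simp add: abs_triangle_ineq4)

lemma co_norm:
  assumes "\<forall>a\<in>A. l1norm n a \<le> B" "b \<in> Co A"
  shows "l1norm n b \<le> B"
proof -
  have "\<exists>(k::nat) c p. (\<forall>i<k. 0 \<le> c i \<and> p i \<in> A) \<and> (\<Sum>i<k. c i) = 1 \<and>
    b = (\<lambda>j. \<Sum>i<k. c i * p i j)" using assms(2) unfolding Co_def by simp
  then obtain k c p where h0: "(\<forall>i<(k::nat). 0 \<le> c i \<and> p i \<in> A) \<and> (\<Sum>i<k. c i) = 1 \<and>
    b = (\<lambda>j. \<Sum>i<k. c i * p i j)" by (elim exE)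
  then have h: "\<forall>i<(k::nat). 0 \<le> c i \<and> p i \<in> A" "(\<Sum>i<k. c i) = 1"
    "b = (\<lambda>j. \<Sum>i<k. c i * p i j)" by auto
  have "l1norm n b = (\<Sum>j<n. \<bar>\<Sum>i<k. c i * p i j\<bar>)" using h by (simp add: l1norm_def)
  also have "\<dots> \<le> (\<Sum>j<n. \<Sum>i<k. c i * \<bar>p i j\<bar>)"
  proof (intro sum_mono)
    fix j
    have "\<bar>\<Sum>i<k. c i * p i j\<bar> \<le> (\<Sum>i<k. \<bar>c i * p i j\<bar>)" by (rule sum_abs)
    also have "\<dots> = (\<Sum>i<k. c i * \<bar>p i j\<bar>)" using h by (intro sum.cong) (auto simp: abs_mult)
    finally show "\<bar>\<Sum>i<k. c i * p i j\<bar> \<le> (\<Sum>i<k. c i * \<bar>p i j\<bar>)" .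
  qed
  also have "\<dots> = (\<Sum>i<k. c i * l1norm n (p i))"
    by (subst sum.swap) (simp add: l1norm_def sum_distrib_left)
  also have "\<dots> \<le> (\<Sum>i<k. c i * B)" using h assms(1) by (intro sum_mono mult_left_mono) auto
  also have "\<dots> = B" using h by (simp add: sum_distrib_right[symmetric])
  finally show ?thesis .
qed

definition Sx :: "nat \<Rightarrow> real \<Rightarrow> (nat \<Rightarrow> real) set" where
  "Sx m R = {x. (\<forall>i. 0 \<le> x i) \<and> (\<forall>i\<ge>m. x i = 0) \<and> (\<Sum>i<m. x i) = R}"

definition Hb :: "nat \<Rightarrow> real \<Rightarrow> (nat \<Rightarrow> real) \<Rightarrow> real" where
  "Hb m R x = Hn m (\<lambda>i. x i / R) / ln 2"

definition lift :: "nat \<Rightarrow> real \<Rightarrow> (nat \<Rightarrow> real) \<Rightarrow> (nat \<Rightarrow> real)" where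
  "lift m R x = (\<lambda>j. if j = m then Hb m R x else x j)"

definition AA :: "nat \<Rightarrow> real \<Rightarrow> (nat \<Rightarrow> real) set" where
  "AA m R = lift m R ` Sx m R"

lemma Sx_p:
  assumes "x \<in> Sx m R" "0 < R"
  shows "\<forall>i<m. 0 \<le> x i / R \<and> x i / R \<le> 1" "(\<Sum>i<m. x i / R) = 1"
proof -
  have x: "\<forall>i. 0 \<le> x i" "(\<Sum>i<m. x i) = R" using assms by (auto simp: Sx_def)
  show "(\<Sum>i<m. x i / R) = 1" using x assms by (simp add: sum_divide_distrib[symmetric])
  show "\<forall>i<m. 0 \<le> x i / R \<and> x i / R \<le> 1"
  proof (intro allI impI conjI)
    fix i assume i: "i < m"
    show "0 \<le> x i / R" using x assms by simp
    have "x i \<le> (\<Sum>i<m. x i)" using x i by (intro member_le_sum) auto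
    then show "x i / R \<le> 1" using x assms by simp
  qed
qed

lemma Hb_bounds:
  assumes "x \<in> Sx m R" "0 < R" "1 \<le> m"
  shows "0 \<le> Hb m R x" "Hb m R x \<le> log 2 (real m)"
proof -
  note p = Sx_p[OF assms(1,2)]
  show "0 \<le> Hb m R x" unfolding Hb_def using Hn_ge0[OF p(1)] by simp
  have "Hn m (\<lambda>i. x i / R) \<le> ln (real m)" using p assms by (intro Hn_le) auto
  then show "Hb m R x \<le> log 2 (real m)" unfolding Hb_def log_def by (simp add: divide_right_mono)
qed

lemma lift_lt: "i < m \<Longrightarrow> lift m R x i = x i"
  by (simp add: lift_def)

lemma lift_m: "lift m R x m = Hb m R x"
  by (simp add: lift_def)

lemma AA_l1space: "AA m R \<subseteq> l1space (Suc m)"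
  by (auto simp: AA_def l1space_def lift_def Sx_def)

lemma Sx_ne: assumes "1 \<le> m" "0 \<le> R" shows "(\<lambda>j. if j = 0 then R else 0) \<in> Sx m R"
  using assms by (auto simp: Sx_def)

lemma lift_norm:
  assumes "x \<in> Sx m R" "0 < R" "1 \<le> m"
  shows "l1norm (Suc m) (lift m R x) \<le> R + log 2 (real m)"
proof -
  have "(\<Sum>i<m. \<bar>lift m R x i\<bar>) = (\<Sum>i<m. x i)" using assms by (intro sum.cong) (auto simp: lift_lt Sx_def)
  then show ?thesis using Hb_bounds[OF assms] assms by (simp add: l1norm_Suc lift_m Sx_def)
qed

lemma lift_dist:
  assumes "x \<in> Sx m R" "y \<in> Sx m R" "0 < R" "1 \<le> m"
  shows "l1dist (Suc m) (lift m R x) (lift m R y) \<le> 2 * R + log 2 (real m)"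
proof -
  have "(\<Sum>i<m. \<bar>lift m R x i - lift m R y i\<bar>) \<le> (\<Sum>i<m. x i + y i)"
  proof (intro sum_mono)
    fix i assume i: "i \<in> {..<m}"
    have "0 \<le> x i" "0 \<le> y i" using assms by (auto simp: Sx_def)
    then show "\<bar>lift m R x i - lift m R y i\<bar> \<le> x i + y i" using i by (simp add: lift_lt)
  qed
  also have "\<dots> = 2 * R" using assms by (simp add: sum.distrib Sx_def)
  finally have 1: "(\<Sum>i<m. \<bar>lift m R x i - lift m R y i\<bar>) \<le> 2 * R" .
  have 2: "\<bar>Hb m R x - Hb m R y\<bar> \<le> log 2 (real m)"
    using Hb_bounds[OF assms(1,3,4)] Hb_bounds[OF assms(2,3,4)] by linarith
  show ?thesis using 1 2 by (simp add: l1dist_Suc lift_m)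
qed

lemma AA_E: "a \<in> AA m R \<Longrightarrow> \<exists>x. x \<in> Sx m R \<and> a = lift m R x"
  unfolding AA_def by (rule imageE) auto

lemma AA_approx_convex:
  assumes "0 < R" "1 \<le> m"
  shows "approx_convex (Suc m) (AA m R)"
  unfolding approx_convex_def
proof (intro ballI allI impI)
  fix a b and t :: real
  assume a: "a \<in> AA m R" and b: "b \<in> AA m R" and t: "0 \<le> t \<and> t \<le> 1"
  from AA_E[OF a] obtain x where x0: "x \<in> Sx m R \<and> a = lift m R x" ..
  from AA_E[OF b] obtain y where y0: "y \<in> Sx m R \<and> b = lift m R y" ..
  from x0 have x: "x \<in> Sx m R" "a = lift m R x" by auto
  from y0 have y: "y \<in> Sx m R" "b = lift m R y" by auto
  define \<xi> where "\<xi> = (\<lambda>i. t * x i + (1-t) * y i)"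
  have xs: "\<forall>i. 0 \<le> x i" "\<forall>i\<ge>m. x i = 0" "(\<Sum>i<m. x i) = R" using x by (auto simp: Sx_def)
  have ys: "\<forall>i. 0 \<le> y i" "\<forall>i\<ge>m. y i = 0" "(\<Sum>i<m. y i) = R" using y by (auto simp: Sx_def)
  have "(\<Sum>i<m. \<xi> i) = t * (\<Sum>i<m. x i) + (1-t) * (\<Sum>i<m. y i)"
    unfolding \<xi>_def by (simp add: sum.distrib sum_distrib_left)
  then have "(\<Sum>i<m. \<xi> i) = R" using xs ys by (simp add: algebra_simps)
  moreover have "\<forall>i. 0 \<le> \<xi> i" using xs ys t unfolding \<xi>_def by auto
  moreover have "\<forall>i\<ge>m. \<xi> i = 0" using xs ys unfolding \<xi>_def by auto
  ultimately have \<xi>S: "\<xi> \<in> Sx m R" by (simp add: Sx_def)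
  then have mem: "lift m R \<xi> \<in> AA m R" unfolding AA_def by (rule imageI)
  define z where "z = (\<lambda>i. t * a i + (1 - t) * b i)"
  have px: "(\<lambda>i. \<xi> i / R) = (\<lambda>i. t * (x i / R) + (1-t) * (y i / R))"
    unfolding \<xi>_def by (simp add: add_divide_distrib)
  note p1 = Sx_p[OF x(1) assms(1)] and p2 = Sx_p[OF y(1) assms(1)]
  have m1: "t * Hn m (\<lambda>i. x i / R) + (1-t) * Hn m (\<lambda>i. y i / R) \<le> Hn m (\<lambda>i. \<xi> i / R)"
    and m2: "Hn m (\<lambda>i. \<xi> i / R) \<le> t * Hn m (\<lambda>i. x i / R) + (1-t) * Hn m (\<lambda>i. y i / R) + ln 2"
  proof -
    have q1: "\<forall>i<m. 0 \<le> x i / R" using p1(1) by blast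
    have q2: "\<forall>i<m. 0 \<le> y i / R" using p2(1) by blast
    have t1: "0 \<le> t" "t \<le> 1" using t by auto
    show "t * Hn m (\<lambda>i. x i / R) + (1-t) * Hn m (\<lambda>i. y i / R) \<le> Hn m (\<lambda>i. \<xi> i / R)"
      unfolding px by (rule Hn_mix(1)[OF q1 q2 p1(2) p2(2) t1])
    show "Hn m (\<lambda>i. \<xi> i / R) \<le> t * Hn m (\<lambda>i. x i / R) + (1-t) * Hn m (\<lambda>i. y i / R) + ln 2"
      unfolding px by (rule Hn_mix(2)[OF q1 q2 p1(2) p2(2) t1])
  qed
  have l2: "0 < ln (2::real)" by simp
  have e: "t * Hb m R x + (1-t) * Hb m R y - Hb m R \<xi> =
     (t * Hn m (\<lambda>i. x i / R) + (1-t) * Hn m (\<lambda>i. y i / R) - Hn m (\<lambda>i. \<xi> i / R)) / ln 2"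
    unfolding Hb_def by (simp add: diff_divide_distrib add_divide_distrib)
  define X where "X = t * Hn m (\<lambda>i. x i / R) + (1-t) * Hn m (\<lambda>i. y i / R) - Hn m (\<lambda>i. \<xi> i / R)"
  have X1: "- ln 2 \<le> X" "X \<le> 0" unfolding X_def using m1 m2 by linarith+
  have bnd: "\<bar>t * Hb m R x + (1-t) * Hb m R y - Hb m R \<xi>\<bar> \<le> 1"
  proof -
    have "X / ln 2 \<le> 0" using X1 l2 by (simp add: divide_nonpos_pos)
    moreover have "-1 \<le> X / ln 2" using X1 l2 by (simp add: pos_le_divide_eq)
    ultimately show ?thesis unfolding e X_def[symmetric] by linarith
  qed
  have "l1dist (Suc m) z (lift m R \<xi>) = (\<Sum>i<m. \<bar>z i - lift m R \<xi> i\<bar>) + \<bar>z m - lift m R \<xi> m\<bar>"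
    by (rule l1dist_Suc)
  also have "(\<Sum>i<m. \<bar>z i - lift m R \<xi> i\<bar>) = 0"
    unfolding z_def x(2) y(2) \<xi>_def by (intro sum.neutral) (simp add: lift_lt)
  also have "\<bar>z m - lift m R \<xi> m\<bar> = \<bar>t * Hb m R x + (1-t) * Hb m R y - Hb m R \<xi>\<bar>"
    unfolding z_def x(2) y(2) by (simp add: lift_m)
  finally have "l1dist (Suc m) z (lift m R \<xi>) \<le> 1" using bnd by simp
  then show "l1setdist (Suc m) (\<lambda>i. t * a i + (1 - t) * b i) (AA m R) \<le> 1"
    using setdist_le[OF mem, of "Suc m" z] unfolding z_def by linarith
qed


definition ee :: "real \<Rightarrow> nat \<Rightarrow> nat \<Rightarrow> real" where
  "ee R i = (\<lambda>j. if j = i then R else 0)"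

lemma ee_Sx: "i < m \<Longrightarrow> 0 < R \<Longrightarrow> ee R i \<in> Sx m R"
  by (auto simp: ee_def Sx_def)

lemma ee_lift: assumes "i < m" "0 < R" shows "lift m R (ee R i) = ee R i"
proof -
  have "(\<Sum>j<m. ee R i j / R * ln (ee R i j / R)) = 0"
    using assms by (intro sum.neutral) (auto simp: ee_def)
  then have "Hb m R (ee R i) = 0" by (simp add: Hb_def Hn_def)
  then show ?thesis using assms by (auto simp: lift_def ee_def)
qed

lemma ee_AA: assumes "i < m" "0 < R" shows "ee R i \<in> AA m R"
proof -
  have "lift m R (ee R i) \<in> AA m R" unfolding AA_def by (rule imageI) (rule ee_Sx[OF assms])
  then show ?thesis using ee_lift[OF assms] by simp
qed

lemma w_Co:
  assumes "1 \<le> m" "0 < R"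
  shows "(\<lambda>j. if j < m then R / real m else 0) \<in> Co (AA m R)"
proof -
  have 1: "\<forall>i<m. 0 \<le> 1 / real m \<and> ee R i \<in> AA m R" using ee_AA assms by auto
  have 2: "(\<Sum>i<m. 1 / real m) = 1" using assms by simp
  have 3: "(\<lambda>j. if j < m then R / real m else 0) = (\<lambda>j. \<Sum>i<m. 1 / real m * ee R i j)"
  proof
    fix j
    have "(\<Sum>i<m. 1 / real m * ee R i j) = (\<Sum>i<m. if i = j then R / real m else 0)"
      by (intro sum.cong) (auto simp: ee_def)
    also have "\<dots> = (if j < m then R / real m else 0)" by (simp add: sum.delta)
    finally show "(if j < m then R / real m else 0) = (\<Sum>i<m. 1 / real m * ee R i j)" by simp
  qed
  show ?thesis unfolding Co_def mem_Collect_eq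
    by (intro exI[of _ m] exI[of _ "\<lambda>i. 1 / real m"] exI[of _ "ee R"] conjI 1 2 3)
qed

lemma w_dist:
  assumes "1 \<le> m" and R: "R = 2 * log 2 (real m) + 3" and x: "x \<in> Sx m R"
  shows "log 2 (real m) \<le> l1dist (Suc m) (\<lambda>j. if j < m then R / real m else 0) (lift m R x)"
proof -
  have lm: "0 \<le> ln (real m)" using assms by simp
  have l2: "0 < ln (2::real)" by simp
  have l23: "2/3 \<le> ln (2::real)" by (rule ln2_ge_two_thirds)
  have lg: "0 \<le> log 2 (real m)" using assms by simp
  have Rp: "0 < R" unfolding R using lg by simp
  note p = Sx_p[OF x Rp]
  define S where "S = (\<Sum>i<m. \<bar>x i / R - 1 / real m\<bar>)"
  have S0: "0 \<le> S" unfolding S_def by (intro sum_nonneg) auto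
  have def: "ln (real m) - Hn m (\<lambda>i. x i / R) \<le> (2*ln (real m) + 2) * S"
    unfolding S_def using Hn_deficit[OF assms(1) p(1) p(2)] .
  have RL: "R * ln 2 = 2 * ln (real m) + 3 * ln 2" unfolding R log_def using l2 by (simp add: field_simps)
  have "(2*ln (real m) + 2) * S \<le> (R * ln 2) * S" unfolding RL using l23 S0 by (intro mult_right_mono) auto
  then have A: "ln (real m) \<le> (R * S) * ln 2 + Hn m (\<lambda>i. x i / R)" using def by (simp add: algebra_simps)
  have B: "log 2 (real m) \<le> R * S + Hb m R x"
  proof -
    have "log 2 (real m) = ln (real m) / ln 2" by (simp add: log_def)
    also have "\<dots> \<le> ((R * S) * ln 2 + Hn m (\<lambda>i. x i / R)) / ln 2" using A l2 by (intro divide_right_mono) auto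
    also have "\<dots> = R * S + Hb m R x" unfolding Hb_def using l2 by (simp add: field_simps)
    finally show ?thesis .
  qed
  have C: "(\<Sum>i<m. \<bar>(if i < m then R / real m else 0) - lift m R x i\<bar>) = R * S"
    unfolding S_def sum_distrib_left
  proof (intro sum.cong refl)
    fix i assume i: "i \<in> {..<m}"
    have "R * \<bar>x i / R - 1 / real m\<bar> = \<bar>R * (x i / R - 1 / real m)\<bar>" using Rp by (simp add: abs_mult)
    also have "R * (x i / R - 1 / real m) = x i - R / real m" using Rp by (simp add: field_simps)
    finally show "\<bar>(if i < m then R / real m else 0) - lift m R x i\<bar> = R * \<bar>x i / R - 1 / real m\<bar>"
      using i by (simp add: lift_lt abs_minus_commute)
  qed
  have D: "\<bar>(if m < m then R / real m else 0) - lift m R x m\<bar> = Hb m R x"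
    using Hb_bounds(1)[OF x Rp assms(1)] by (simp add: lift_m)
  show ?thesis unfolding l1dist_Suc C D using B by simp
qed


lemma constr:
  assumes m1: "1 \<le> m" and R: "R = 2 * log 2 (real m) + 3"
  shows "AA m R \<subseteq> l1space (Suc m) \<and> AA m R \<noteq> {} \<and>
     bdd_above {l1dist (Suc m) x y | x y. x \<in> AA m R \<and> y \<in> AA m R} \<and>
     approx_convex (Suc m) (AA m R) \<and>
     hausd (Suc m) (AA m R) (Co (AA m R)) \<ge> log 2 (real m) \<and>
     l1diam (Suc m) (AA m R) \<le> 2 * R + log 2 (real m)"
proof -
  have lg: "0 \<le> log 2 (real m)" using assms by simp
  have Rp: "0 < R" unfolding R using lg by simp
  have a0: "ee R 0 \<in> AA m R" using ee_AA[of 0 m R] m1 Rp by simp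
  have ne: "AA m R \<noteq> {}" using a0 by auto
  have pairb: "l1dist (Suc m) a b \<le> 2 * R + log 2 (real m)" if "a \<in> AA m R" "b \<in> AA m R" for a b
  proof -
    from AA_E[OF that(1)] obtain x where x0: "x \<in> Sx m R \<and> a = lift m R x" ..
    from AA_E[OF that(2)] obtain y where y0: "y \<in> Sx m R \<and> b = lift m R y" ..
    from x0 have x: "x \<in> Sx m R" "a = lift m R x" by auto
    from y0 have y: "y \<in> Sx m R" "b = lift m R y" by auto
    show ?thesis unfolding x(2) y(2) by (rule lift_dist[OF x(1) y(1) Rp m1])
  qed
  have nb: "\<forall>a\<in>AA m R. l1norm (Suc m) a \<le> R + log 2 (real m)"
  proof
    fix a assume a: "a \<in> AA m R"
    from AA_E[OF a] obtain x where x0: "x \<in> Sx m R \<and> a = lift m R x" ..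
    from x0 have x: "x \<in> Sx m R" "a = lift m R x" by auto
    show "l1norm (Suc m) a \<le> R + log 2 (real m)" unfolding x(2) by (rule lift_norm[OF x(1) Rp m1])
  qed
  define D where "D = {l1dist (Suc m) x y | x y. x \<in> AA m R \<and> y \<in> AA m R}"
  have Dne: "D \<noteq> {}" unfolding D_def using a0 by blast
  have Db: "\<forall>d\<in>D. d \<le> 2 * R + log 2 (real m)" unfolding D_def using pairb by blast
  have bddD: "bdd_above D" using Db by (intro bdd_aboveI[where M = "2 * R + log 2 (real m)"]) auto
  have diam: "l1diam (Suc m) (AA m R) \<le> 2 * R + log 2 (real m)"
    unfolding l1diam_def D_def[symmetric] using Dne Db by (intro cSup_least) auto
  define w where "w = (\<lambda>j. if j < m then R / real m else 0)"
  have wC: "w \<in> Co (AA m R)" unfolding w_def by (rule w_Co[OF m1 Rp])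
  have bddC: "bdd_above ((\<lambda>b. l1setdist (Suc m) b (AA m R)) ` Co (AA m R))"
  proof (intro bdd_aboveI[where M = "2 * (R + log 2 (real m))"])
    fix d assume "d \<in> (\<lambda>b. l1setdist (Suc m) b (AA m R)) ` Co (AA m R)"
    then obtain b where b: "b \<in> Co (AA m R)" "d = l1setdist (Suc m) b (AA m R)" by blast
    have "d \<le> l1dist (Suc m) b (ee R 0)" unfolding b(2) by (rule setdist_le[OF a0])
    also have "\<dots> \<le> l1norm (Suc m) b + l1norm (Suc m) (ee R 0)" by (rule l1dist_tri)
    also have "\<dots> \<le> (R + log 2 (real m)) + (R + log 2 (real m))"
      using co_norm[OF nb b(1)] nb a0 by (intro add_mono) auto
    finally show "d \<le> 2 * (R + log 2 (real m))" by simp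
  qed
  have wd: "log 2 (real m) \<le> l1setdist (Suc m) w (AA m R)"
    unfolding l1setdist_def
  proof (rule cInf_greatest)
    show "(\<lambda>a. l1dist (Suc m) w a) ` AA m R \<noteq> {}" using ne by simp
    fix d assume "d \<in> (\<lambda>a. l1dist (Suc m) w a) ` AA m R"
    then obtain a where a: "a \<in> AA m R" "d = l1dist (Suc m) w a" by blast
    from AA_E[OF a(1)] obtain x where x0: "x \<in> Sx m R \<and> a = lift m R x" ..
    from x0 have x: "x \<in> Sx m R" "a = lift m R x" by auto
    show "log 2 (real m) \<le> d" unfolding a(2) x(2) w_def by (rule w_dist[OF m1 R x(1)])
  qed
  have "l1setdist (Suc m) w (AA m R) \<le> Sup ((\<lambda>b. l1setdist (Suc m) b (AA m R)) ` Co (AA m R))"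
    using wC bddC by (intro cSup_upper) auto
  then have haus: "hausd (Suc m) (AA m R) (Co (AA m R)) \<ge> log 2 (real m)"
    unfolding hausd_def using wd by linarith
  show ?thesis using AA_l1space ne bddD[unfolded D_def] AA_approx_convex[OF Rp m1] haus diam by blast
qed


theorem proposition4p3:
  fixes \<epsilon> :: real
  assumes "0 < \<epsilon>" and "\<epsilon> < 2"
  shows "\<forall>\<^sub>F n in sequentially. \<exists>A. A \<subseteq> l1space n \<and> A \<noteq> {} \<and>
            bdd_above {l1dist n x y | x y. x \<in> A \<and> y \<in> A} \<and>
            approx_convex n A \<and>
            hausd n A (Co A) \<ge> log 2 (real n) - \<epsilon> \<and>
            l1diam n A \<le> (8 / \<epsilon> + 1) * log 2 (real n)"
proof -
  define c where "c = 8 / \<epsilon> - 4"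
  have cp: "0 < c" unfolding c_def using assms by (simp add: field_simps)
  define N where "N = max (nat \<lceil>2 / \<epsilon>\<rceil> + 2) (nat \<lceil>2 powr (6 / c)\<rceil> + 1)"
  have ev: "\<forall>\<^sub>F n in sequentially. N \<le> n" by (rule eventually_ge_at_top)
  show ?thesis
  proof (rule eventually_mono[OF ev])
    fix n assume nN: "N \<le> n"
    define m where "m = n - 1"
    have n: "n = Suc m" using nN unfolding m_def N_def by simp
    have m1: "1 \<le> m" using nN unfolding m_def N_def by simp
    have mge: "2 / \<epsilon> \<le> real m"
    proof -
      have "nat \<lceil>2 / \<epsilon>\<rceil> + 2 \<le> N" unfolding N_def by (rule max.cobounded1)
      then have "nat \<lceil>2 / \<epsilon>\<rceil> + 1 \<le> m" using nN unfolding m_def by linarith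
      then have "real (nat \<lceil>2 / \<epsilon>\<rceil>) \<le> real m" by linarith
      moreover have "2 / \<epsilon> \<le> real (nat \<lceil>2 / \<epsilon>\<rceil>)" by linarith
      ultimately show ?thesis by linarith
    qed
    have nge: "2 powr (6 / c) \<le> real n"
    proof -
      have "nat \<lceil>2 powr (6 / c)\<rceil> + 1 \<le> N" unfolding N_def by (rule max.cobounded2)
      then have "nat \<lceil>2 powr (6 / c)\<rceil> \<le> n" using nN by linarith
      then have "real (nat \<lceil>2 powr (6 / c)\<rceil>) \<le> real n" by linarith
      moreover have "2 powr (6 / c) \<le> real (nat \<lceil>2 powr (6 / c)\<rceil>)" by linarith
      ultimately show ?thesis by linarith
    qed
    have mpos: "0 < real m" using m1 by simp
    have npos: "0 < real n" using n by simp
    have l2: "0 < ln (2::real)" by simp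
    have l23: "2/3 \<le> ln (2::real)" by (rule ln2_ge_two_thirds)
    have a: "log 2 (real n) - \<epsilon> \<le> log 2 (real m)"
    proof -
      have "ln (real n / real m) \<le> real n / real m - 1" using mpos npos by (intro ln_le_minus_one) simp
      also have "real n / real m - 1 = 1 / real m" using mpos n by (simp add: field_simps)
      finally have "ln (real n) - ln (real m) \<le> 1 / real m" using mpos npos by (simp add: ln_div)
      moreover have "1 / real m \<le> \<epsilon> / 2" using mge mpos assms(1) by (simp add: field_simps)
      ultimately have L: "ln (real n) - ln (real m) \<le> \<epsilon> / 2" by linarith
      have "log 2 (real n) - log 2 (real m) = (ln (real n) - ln (real m)) / ln 2"
        by (simp add: log_def diff_divide_distrib)
      also have "\<dots> \<le> (\<epsilon> / 2) / ln 2" using L l2 by (intro divide_right_mono) auto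
      also have "\<dots> \<le> (\<epsilon> / 2) / (2/3)" using l23 assms(1) by (intro divide_left_mono) auto
      also have "\<dots> \<le> \<epsilon>" using assms(1) by simp
      finally show ?thesis by linarith
    qed
    have b: "2 * (2 * log 2 (real m) + 3) + log 2 (real m) \<le> (8 / \<epsilon> + 1) * log 2 (real n)"
    proof -
      have lmn: "log 2 (real m) \<le> log 2 (real n)" using mpos n by simp
      have "log 2 (2 powr (6 / c)) \<le> log 2 (real n)" using nge npos by (subst log_le_cancel_iff) auto
      then have "6 / c \<le> log 2 (real n)" by simp
      then have "6 \<le> c * log 2 (real n)" using cp by (simp add: field_simps)
      then have "6 \<le> (8 / \<epsilon> - 4) * log 2 (real n)" unfolding c_def .
      then show ?thesis using lmn by (simp add: algebra_simps)
    qed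
    define R where "R = 2 * log 2 (real m) + 3"
    note C = constr[OF m1 R_def]
    show "\<exists>A. A \<subseteq> l1space n \<and> A \<noteq> {} \<and>
            bdd_above {l1dist n x y | x y. x \<in> A \<and> y \<in> A} \<and>
            approx_convex n A \<and>
            hausd n A (Co A) \<ge> log 2 (real n) - \<epsilon> \<and>
            l1diam n A \<le> (8 / \<epsilon> + 1) * log 2 (real n)"
    proof (intro exI[of _ "AA m R"] conjI)
      show "AA m R \<subseteq> l1space n" using C n by simp
      show "AA m R \<noteq> {}" using C by simp
      show "bdd_above {l1dist n x y | x y. x \<in> AA m R \<and> y \<in> AA m R}" using C n by simp
      show "approx_convex n (AA m R)" using C n by simp
      show "log 2 (real n) - \<epsilon> \<le> hausd n (AA m R) (Co (AA m R))" using C n a by simp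
      show "l1diam n (AA m R) \<le> (8 / \<epsilon> + 1) * log 2 (real n)" using C n b unfolding R_def by simp
    qed
  qed
qed

end
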